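(* For all positive integers $\alpha_1,\alpha_2,\alpha_3$ and all $n\ge 0$, $$|P_n^2|\le [x^{n(\alpha_1+\alpha_2+\alpha_3)}]\left(\frac{1}{1-x^{\alpha_1}-x^{\alpha_2}-x^{\alpha_3}+x^{\alpha_1+\alpha_3}+2x^{\alpha_1+2\alpha_2+\alpha_3}}\right).$$
   Context: A system of $2$ stacks in series consists of an input queue, stack 1, stack 2, and an output queue. Moves: $m_1$ moves the front of the input queue onto stack 1; $m_2$ pops stack 1 and pushes onto stack 2; $m_3$ pops stack 2 and enqueues at the back of the output queue; a move is illegal if its source is empty. $P_n^2\subseteq S_n$ is the set of $\pi$ such that some legal sequence of moves, starting with $1,\dots,n$ (front to back) in the input queue and everything else empty, ends with $\pi(1),\dots,\pi(n)$ (front to back) in the output queue and everything else empty. $[x^N]F$ denotes the coefficient of $x^N$ in the power series $F$. *)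

theory Defs
  imports "HOL-Combinatorics.Permutations" "HOL-Computational_Algebra.Formal_Power_Series"
begin

text \<open>States of the two-stacks-in-series machine:
  (input queue front-to-back, stack 1 top-first, stack 2 top-first, output queue front-to-back).\<close>
type_synonym state = "nat list \<times> nat list \<times> nat list \<times> nat list"

inductive move :: "state \<Rightarrow> state \<Rightarrow> bool" where
  m1: "move (x # inp, s1, s2, out) (inp, x # s1, s2, out)"
| m2: "move (inp, x # s1, s2, out) (inp, s1, x # s2, out)"
| m3: "move (inp, s1, x # s2, out) (inp, s1, s2, out @ [x])"

definition P2 :: "nat \<Rightarrow> (nat \<Rightarrow> nat) set" where
  "P2 n = {\<pi>. \<pi> permutes {1..n} \<and>
     move\<^sup>*\<^sup>* ([1..<n+1], [], [], []) ([], [], [], map \<pi> [1..<n+1])}"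

end

theory Submission imports Defs begin

datatype L = LA | LB | LC

fun step :: "L \<Rightarrow> state \<Rightarrow> state option" where
  "step LA (x#inp, s1, s2, out) = Some (inp, x#s1, s2, out)"
| "step LB (inp, x#s1, s2, out) = Some (inp, s1, x#s2, out)"
| "step LC (inp, s1, x#s2, out) = Some (inp, s1, s2, out@[x])"
| "step _ _ = None"

fun exec :: "L list \<Rightarrow> state \<Rightarrow> state option" where
  "exec [] s = Some s"
| "exec (l#w) s = (case step l s of None \<Rightarrow> None | Some s' \<Rightarrow> exec w s')"

lemma exec_append: "exec (xs @ ys) s = Option.bind (exec xs s) (exec ys)"
  by (induction xs arbitrary: s) (auto split: option.splits)

lemma move_step: "move s t \<Longrightarrow> \<exists>l. step l s = Some t"
  by (induction rule: move.induct) (metis step.simps)+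

lemma star_exec: "move\<^sup>*\<^sup>* s t \<Longrightarrow> \<exists>w. exec w s = Some t"
proof (induction rule: rtranclp_induct)
  case base
  then show ?case by (metis exec.simps(1))
next
  case (step y z)
  then obtain w l where "exec w s = Some y" "step l y = Some z" using move_step by blast
  then have "exec (w @ [l]) s = Some z" by (simp add: exec_append)
  then show ?case by blast
qed

fun goodr :: "L list \<Rightarrow> bool" where
  "goodr [] = True"
| "goodr (x # r) = (goodr r \<and> (x = LC \<longrightarrow> (take 1 r \<noteq> [LA] \<and> take 3 r \<noteq> [LB,LA,LB] \<and> take 3 r \<noteq> [LB,LB,LA])))"

definition rules :: "(L list \<times> L list) set" where
  "rules = {([LC,LA],[LA,LC]), ([LC,LB,LA,LB],[LB,LC,LB,LA]), ([LC,LB,LB,LA],[LB,LA,LC,LB])}"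

lemma take1_eq: "take 1 r = [x] \<Longrightarrow> \<exists>r'. r = x # r'"
  by (metis append_take_drop_id append_Cons append_Nil)

lemma take3_eq: "take 3 r = [x,y,z] \<Longrightarrow> \<exists>r'. r = x # y # z # r'"
  by (metis append_take_drop_id append_Cons append_Nil)

lemma not_good_decomp:
  "\<not> goodr r \<Longrightarrow> \<exists>r1 p q r2. r = r1 @ p @ r2 \<and> (p, q) \<in> rules"
proof (induction r)
  case Nil then show ?case by simp
next
  case (Cons x r)
  show ?case
  proof (cases "goodr r")
    case False
    then obtain r1 p q r2 where "r = r1 @ p @ r2" "(p, q) \<in> rules" using Cons.IH by blast
    then have "x # r = (x # r1) @ p @ r2" by simp
    then show ?thesis using \<open>(p, q) \<in> rules\<close>
      by (intro exI[of _ "x # r1"] exI[of _ p] exI[of _ q] exI[of _ r2]) simp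
  next
    case True
    have h: "\<not> (goodr r \<and> (x = LC \<longrightarrow> (take 1 r \<noteq> [LA] \<and> take 3 r \<noteq> [LB,LA,LB] \<and> take 3 r \<noteq> [LB,LB,LA])))"
      using Cons.prems goodr.simps(2)[of x r] by argo
    from h True have "x = LC" by argo
    from h True have "take 1 r = [LA] \<or> take 3 r = [LB,LA,LB] \<or> take 3 r = [LB,LB,LA]" by argo
    then show ?thesis
    proof (elim disjE)
      assume "take 1 r = [LA]"
      then obtain r' where "r = LA # r'" using take1_eq[of r LA] by (elim meta_impE exE) auto
      then have "x # r = [] @ [LC,LA] @ r'" using \<open>x = LC\<close> by simp
      moreover have "([LC,LA], [LA,LC]) \<in> rules" unfolding rules_def by simp
      ultimately show ?thesis
        by (intro exI[of _ "[]"] exI[of _ "[LC,LA]"] exI[of _ "[LA,LC]"] exI[of _ r']) simp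
    next
      assume "take 3 r = [LB,LA,LB]"
      then obtain r' where "r = LB # LA # LB # r'" using take3_eq[of r LB LA LB] by (elim meta_impE exE) auto
      then have "x # r = [] @ [LC,LB,LA,LB] @ r'" using \<open>x = LC\<close> by simp
      moreover have "([LC,LB,LA,LB], [LB,LC,LB,LA]) \<in> rules" unfolding rules_def by simp
      ultimately show ?thesis
        by (intro exI[of _ "[]"] exI[of _ "[LC,LB,LA,LB]"] exI[of _ "[LB,LC,LB,LA]"] exI[of _ r']) simp
    next
      assume "take 3 r = [LB,LB,LA]"
      then obtain r' where "r = LB # LB # LA # r'" using take3_eq[of r LB LB LA] by (elim meta_impE exE) auto
      then have "x # r = [] @ [LC,LB,LB,LA] @ r'" using \<open>x = LC\<close> by simp
      moreover have "([LC,LB,LB,LA], [LB,LA,LC,LB]) \<in> rules" unfolding rules_def by simp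
      ultimately show ?thesis
        by (intro exI[of _ "[]"] exI[of _ "[LC,LB,LB,LA]"] exI[of _ "[LB,LA,LC,LB]"] exI[of _ r']) simp
    qed
  qed
qed

lemma exec_r2t: "exec [LB,LA,LB,LC] (inp,s1,s2,out) = exec [LA,LB,LC,LB] (inp,s1,s2,out)"
  by (cases inp; cases s1; simp)
lemma exec_r3t: "exec [LA,LB,LB,LC] (inp,s1,s2,out) = exec [LB,LC,LA,LB] (inp,s1,s2,out)"
  by (cases inp; cases s1; simp)
lemma exec_r1t: "exec [LA,LC] (inp,s1,s2,out) = exec [LC,LA] (inp,s1,s2,out)"
  by (cases inp; cases s2; simp)
lemma exec_r1: "exec [LA,LC] s = exec [LC,LA] s"
  by (cases s) (simp only: exec_r1t)
lemma exec_r2: "exec [LB,LA,LB,LC] s = exec [LA,LB,LC,LB] s"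
  by (cases s) (simp only: exec_r2t)
lemma exec_r3: "exec [LA,LB,LB,LC] s = exec [LB,LC,LA,LB] s"
  by (cases s) (simp only: exec_r3t)

lemma rule_exec: "(p, q) \<in> rules \<Longrightarrow> exec (rev q) s = exec (rev p) s"
  unfolding rules_def by (auto simp del: exec.simps simp add: exec_r1 exec_r2 exec_r3)

fun mu :: "L list \<Rightarrow> nat" where
  "mu [] = 0"
| "mu (x # r) = (if x = LC then Suc (length r) else 0) + mu r"

lemma mu_append: "mu (xs @ ys) = mu xs + length (filter (\<lambda>x. x = LC) xs) * length ys + mu ys"
  by (induction xs) auto

lemma rule_mu: "(p, q) \<in> rules \<Longrightarrow> mu (r1 @ q @ r2) < mu (r1 @ p @ r2)"
  unfolding rules_def by (auto simp: mu_append)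

lemma rule_mset: "(p, q) \<in> rules \<Longrightarrow> mset (r1 @ q @ r2) = mset (r1 @ p @ r2)"
  unfolding rules_def by auto

lemma rewrite_good:
  "exec (rev r) s = Some t \<Longrightarrow> \<exists>r'. goodr r' \<and> exec (rev r') s = Some t \<and> mset r' = mset r"
proof (induction r rule: measure_induct_rule[of mu])
  case (less r)
  show ?case
  proof (cases "goodr r")
    case True then show ?thesis using less.prems by blast
  next
    case False
    then obtain r1 p q r2 where r: "r = r1 @ p @ r2" and pq: "(p, q) \<in> rules"
      using not_good_decomp by blast
    have "exec (rev (r1 @ q @ r2)) s = Some t"
    proof -
      from less.prems r have "exec (rev r2 @ (rev p @ rev r1)) s = Some t" by simp
      then obtain s' where 1: "exec (rev r2) s = Some s'" "exec (rev p @ rev r1) s' = Some t"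
        by (auto simp: exec_append split: Option.bind_splits)
      then obtain s'' where "exec (rev p) s' = Some s''" "exec (rev r1) s'' = Some t"
        by (auto simp: exec_append split: Option.bind_splits)
      then have "exec (rev q) s' = Some s''" using rule_exec[OF pq] by simp
      then show ?thesis using 1(1) \<open>exec (rev r1) s'' = Some t\<close>
        by (simp add: exec_append)
    qed
    moreover have "mu (r1 @ q @ r2) < mu r" using r rule_mu[OF pq] by simp
    ultimately obtain r' where "goodr r'" "exec (rev r') s = Some t" "mset r' = mset (r1 @ q @ r2)"
      using less.IH by blast
    then show ?thesis using rule_mset[OF pq] r by auto
  qed
qed


lemma L_UNIV: "(UNIV :: L set) = {LA, LB, LC}"
  using L.exhaust by auto

fun lw :: "nat \<Rightarrow> nat \<Rightarrow> nat \<Rightarrow> L \<Rightarrow> nat" where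
  "lw a1 a2 a3 LA = a1" | "lw a1 a2 a3 LB = a2" | "lw a1 a2 a3 LC = a3"

definition wt :: "nat \<Rightarrow> nat \<Rightarrow> nat \<Rightarrow> L list \<Rightarrow> nat" where
  "wt a1 a2 a3 r = sum_list (map (lw a1 a2 a3) r)"

lemma wt_Nil[simp]: "wt a1 a2 a3 [] = 0" by (simp add: wt_def)
lemma wt_Cons[simp]: "wt a1 a2 a3 (x # r) = lw a1 a2 a3 x + wt a1 a2 a3 r" by (simp add: wt_def)

lemma wt_count: "wt a1 a2 a3 r = a1 * count (mset r) LA + a2 * count (mset r) LB + a3 * count (mset r) LC"
proof (induction r)
  case Nil then show ?case by simp
next
  case (Cons x r) then show ?case by (cases x) (auto simp: algebra_simps)
qed

lemma length_le_wt: "a1 > 0 \<Longrightarrow> a2 > 0 \<Longrightarrow> a3 > 0 \<Longrightarrow> length r \<le> wt a1 a2 a3 r"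
proof (induction r)
  case Nil then show ?case by simp
next
  case (Cons x r) then show ?case by (cases x) auto
qed

definition G :: "nat \<Rightarrow> nat \<Rightarrow> nat \<Rightarrow> int \<Rightarrow> L list set" where
  "G a1 a2 a3 M = {r. goodr r \<and> int (wt a1 a2 a3 r) = M}"

lemma G_finite:
  assumes "a1 > 0" "a2 > 0" "a3 > 0"
  shows "finite (G a1 a2 a3 M)"
proof -
  have "G a1 a2 a3 M \<subseteq> {xs. set xs \<subseteq> UNIV \<and> length xs \<le> nat M}"
    unfolding G_def using length_le_wt[OF assms] by fastforce
  moreover have "finite {xs. set xs \<subseteq> (UNIV :: L set) \<and> length xs \<le> nat M}"
    by (rule finite_lists_length_le) (simp add: L_UNIV)
  ultimately show ?thesis by (rule finite_subset)
qed

lemma G_neg: "M < 0 \<Longrightarrow> G a1 a2 a3 M = {}"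
  unfolding G_def by auto

lemma G_zero:
  assumes "a1 > 0" "a2 > 0" "a3 > 0"
  shows "G a1 a2 a3 0 = {[]}"
proof -
  have "wt a1 a2 a3 r = 0 \<Longrightarrow> r = []" for r
    using length_le_wt[OF assms, of r] by auto
  then show ?thesis unfolding G_def by auto
qed

definition Bad :: "nat \<Rightarrow> nat \<Rightarrow> nat \<Rightarrow> int \<Rightarrow> L list set" where
  "Bad a1 a2 a3 K = {u \<in> G a1 a2 a3 K. take 1 u = [LA] \<or> take 3 u = [LB,LA,LB] \<or> take 3 u = [LB,LB,LA]}"

lemma G_decomp:
  assumes "M > 0"
  shows "G a1 a2 a3 M = Cons LA ` G a1 a2 a3 (M - a1) \<union> Cons LB ` G a1 a2 a3 (M - a2)
           \<union> Cons LC ` (G a1 a2 a3 (M - a3) - Bad a1 a2 a3 (M - a3))"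
proof (intro equalityI subsetI)
  fix r assume r: "r \<in> G a1 a2 a3 M"
  then have "r \<noteq> []" using assms unfolding G_def by auto
  then obtain x u where ru: "r = x # u" by (cases r) auto
  show "r \<in> Cons LA ` G a1 a2 a3 (M - a1) \<union> Cons LB ` G a1 a2 a3 (M - a2)
           \<union> Cons LC ` (G a1 a2 a3 (M - a3) - Bad a1 a2 a3 (M - a3))"
    using r unfolding ru by (cases x) (auto simp: G_def Bad_def)
next
  fix r assume "r \<in> Cons LA ` G a1 a2 a3 (M - a1) \<union> Cons LB ` G a1 a2 a3 (M - a2)
           \<union> Cons LC ` (G a1 a2 a3 (M - a3) - Bad a1 a2 a3 (M - a3))"
  then show "r \<in> G a1 a2 a3 M" by (auto simp: G_def Bad_def)
qed

lemma Bad_decomp: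
  "Bad a1 a2 a3 K = Cons LA ` G a1 a2 a3 (K - a1) \<union> (\<lambda>u. LB # LA # LB # u) ` G a1 a2 a3 (K - a1 - 2 * a2)
     \<union> (\<lambda>u. LB # LB # LA # u) ` G a1 a2 a3 (K - a1 - 2 * a2)"
proof (intro equalityI subsetI)
  fix r assume r: "r \<in> Bad a1 a2 a3 K"
  then have g: "goodr r" "int (wt a1 a2 a3 r) = K"
    and t: "take 1 r = [LA] \<or> take 3 r = [LB,LA,LB] \<or> take 3 r = [LB,LB,LA]"
    unfolding Bad_def G_def by auto
  from t show "r \<in> Cons LA ` G a1 a2 a3 (K - a1) \<union> (\<lambda>u. LB # LA # LB # u) ` G a1 a2 a3 (K - a1 - 2 * a2)
     \<union> (\<lambda>u. LB # LB # LA # u) ` G a1 a2 a3 (K - a1 - 2 * a2)"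
  proof (elim disjE)
    assume "take 1 r = [LA]"
    then obtain u where "r = LA # u" using take1_eq[of r LA] by (elim meta_impE exE) auto
    then show ?thesis using g by (auto simp: G_def)
  next
    assume "take 3 r = [LB,LA,LB]"
    then obtain u where "r = LB # LA # LB # u" using take3_eq[of r LB LA LB] by (elim meta_impE exE) auto
    then show ?thesis using g by (auto simp: G_def)
  next
    assume "take 3 r = [LB,LB,LA]"
    then obtain u where "r = LB # LB # LA # u" using take3_eq[of r LB LB LA] by (elim meta_impE exE) auto
    then show ?thesis using g by (auto simp: G_def)
  qed
next
  fix r assume "r \<in> Cons LA ` G a1 a2 a3 (K - a1) \<union> (\<lambda>u. LB # LA # LB # u) ` G a1 a2 a3 (K - a1 - 2 * a2)
     \<union> (\<lambda>u. LB # LB # LA # u) ` G a1 a2 a3 (K - a1 - 2 * a2)"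
  then show "r \<in> Bad a1 a2 a3 K" by (auto simp: G_def Bad_def numeral_3_eq_3)
qed


definition gi :: "nat \<Rightarrow> nat \<Rightarrow> nat \<Rightarrow> int \<Rightarrow> int" where
  "gi a1 a2 a3 M = int (card (G a1 a2 a3 M))"

lemma card_Bad:
  assumes "a1 > 0" "a2 > 0" "a3 > 0"
  shows "int (card (Bad a1 a2 a3 K)) = gi a1 a2 a3 (K - a1) + 2 * gi a1 a2 a3 (K - a1 - 2 * a2)"
proof -
  let ?G = "G a1 a2 a3"
  have f: "finite (?G M)" for M using G_finite[OF assms] .
  have "card (Bad a1 a2 a3 K) = card (Cons LA ` ?G (K - a1)) + card ((\<lambda>u. LB # LA # LB # u) ` ?G (K - a1 - 2 * a2))
     + card ((\<lambda>u. LB # LB # LA # u) ` ?G (K - a1 - 2 * a2))"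
    unfolding Bad_decomp
    by (subst card_Un_disjoint, use f in auto)+
  also have "\<dots> = card (?G (K - a1)) + card (?G (K - a1 - 2 * a2)) + card (?G (K - a1 - 2 * a2))"
    by (subst card_image, simp add: inj_on_def)+ simp
  finally show ?thesis unfolding gi_def by simp
qed

lemma gi_rec:
  assumes "a1 > 0" "a2 > 0" "a3 > 0" "M > 0"
  shows "gi a1 a2 a3 M = gi a1 a2 a3 (M - a1) + gi a1 a2 a3 (M - a2) + gi a1 a2 a3 (M - a3)
          - gi a1 a2 a3 (M - a3 - a1) - 2 * gi a1 a2 a3 (M - a3 - a1 - 2 * a2)"
proof -
  let ?G = "G a1 a2 a3"
  have f: "finite (?G M)" for M using G_finite[OF assms(1-3)] .
  have sub: "Bad a1 a2 a3 (M - a3) \<subseteq> ?G (M - a3)" unfolding Bad_def by auto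
  have "card (?G M) = card (Cons LA ` ?G (M - a1)) + card (Cons LB ` ?G (M - a2))
           + card (Cons LC ` (?G (M - a3) - Bad a1 a2 a3 (M - a3)))"
    unfolding G_decomp[OF assms(4)]
    by (subst card_Un_disjoint, use f in auto)+
  also have "\<dots> = card (?G (M - a1)) + card (?G (M - a2)) + card (?G (M - a3) - Bad a1 a2 a3 (M - a3))"
    by (subst card_image, simp)+ simp
  also have "card (?G (M - a3) - Bad a1 a2 a3 (M - a3)) = card (?G (M - a3)) - card (Bad a1 a2 a3 (M - a3))"
    by (rule card_Diff_subset[OF finite_subset[OF sub f] sub])
  finally have "int (card (?G M)) = int (card (?G (M - a1))) + int (card (?G (M - a2)))
       + int (card (?G (M - a3))) - int (card (Bad a1 a2 a3 (M - a3)))"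
    using card_mono[OF f sub] by simp
  then show ?thesis unfolding card_Bad[OF assms(1-3)] by (simp add: gi_def algebra_simps)
qed


lemma gi_neg: "M < 0 \<Longrightarrow> gi a1 a2 a3 M = 0"
  by (simp add: gi_def G_neg)

lemma gi_zero: "a1 > 0 \<Longrightarrow> a2 > 0 \<Longrightarrow> a3 > 0 \<Longrightarrow> gi a1 a2 a3 0 = 1"
  by (simp add: gi_def G_zero)

lemma fps_inv_eq:
  assumes "a1 > 0" "a2 > 0" "a3 > 0"
  shows "inverse (1 - fps_X ^ a1 - fps_X ^ a2 - fps_X ^ a3 + fps_X ^ (a1 + a3)
                      + 2 * fps_X ^ (a1 + 2 * a2 + a3) :: real fps)
       = Abs_fps (\<lambda>N. real_of_int (gi a1 a2 a3 (int N)))"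
proof (rule fps_inverse_unique)
  define F where "F = Abs_fps (\<lambda>N. real_of_int (gi a1 a2 a3 (int N)))"
  have Xk: "fps_nth (fps_X ^ k * F) N = real_of_int (gi a1 a2 a3 (int N - int k))" for k N
    by (simp add: fps_X_power_mult_nth F_def gi_neg of_nat_diff)
  have e: "(1 - fps_X ^ a1 - fps_X ^ a2 - fps_X ^ a3 + fps_X ^ (a1 + a3)
                      + 2 * fps_X ^ (a1 + 2 * a2 + a3)) * F
      = fps_X ^ 0 * F - fps_X ^ a1 * F - fps_X ^ a2 * F - fps_X ^ a3 * F + fps_X ^ (a1 + a3) * F
        + fps_X ^ (a1 + 2 * a2 + a3) * F + fps_X ^ (a1 + 2 * a2 + a3) * F"
    by (simp only: mult_2 power_0 mult_1_left distrib_right left_diff_distrib add.assoc)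
  show "(1 - fps_X ^ a1 - fps_X ^ a2 - fps_X ^ a3 + fps_X ^ (a1 + a3)
                      + 2 * fps_X ^ (a1 + 2 * a2 + a3)) * F = 1"
  proof (rule fps_ext)
    fix N
    show "fps_nth ((1 - fps_X ^ a1 - fps_X ^ a2 - fps_X ^ a3 + fps_X ^ (a1 + a3)
                      + 2 * fps_X ^ (a1 + 2 * a2 + a3)) * F) N = fps_nth (1 :: real fps) N"
    proof (cases "N = 0")
      case True
      then show ?thesis unfolding e using assms by (simp only: fps_add_nth fps_sub_nth Xk) (simp add: gi_neg gi_zero)
    next
      case False
      then have "int N > 0" by simp
      from gi_rec[OF assms this] show ?thesis unfolding e using False
        by (simp only: fps_add_nth fps_sub_nth Xk) (simp add: algebra_simps)
    qed
  qed
qed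


lemma stepA: "step LA (i, s1, s2, o') = Some s' \<longleftrightarrow> (\<exists>x i'. i = x # i' \<and> s' = (i', x # s1, s2, o'))"
  by (cases i) auto
lemma stepB: "step LB (i, s1, s2, o') = Some s' \<longleftrightarrow> (\<exists>x s1'. s1 = x # s1' \<and> s' = (i, s1', x # s2, o'))"
  by (cases s1) auto
lemma stepC: "step LC (i, s1, s2, o') = Some s' \<longleftrightarrow> (\<exists>x s2'. s2 = x # s2' \<and> s' = (i, s1, s2', o' @ [x]))"
  by (cases s2) auto

lemma exec_counts:
  "exec w (i, s1, s2, o') = Some (i2, s12, s22, o2) \<Longrightarrow>
     length i = length i2 + count (mset w) LA \<and>
     length s12 + count (mset w) LB = length s1 + count (mset w) LA \<and>
     length s22 + count (mset w) LC = length s2 + count (mset w) LB \<and>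
     length o2 = length o' + count (mset w) LC"
proof (induction w arbitrary: i s1 s2 o')
  case Nil then show ?case by simp
next
  case (Cons l w)
  then obtain s' where s': "step l (i, s1, s2, o') = Some s'" "exec w s' = Some (i2, s12, s22, o2)"
    by (auto split: option.splits)
  show ?case
  proof (cases l)
    case LA
    with s' obtain x i' where "i = x # i'" "s' = (i', x # s1, s2, o')" by (auto simp: stepA)
    with s' Cons.IH[of i' "x # s1" s2 o'] LA show ?thesis by auto
  next
    case LB
    with s' obtain x s1' where "s1 = x # s1'" "s' = (i, s1', x # s2, o')" by (auto simp: stepB)
    with s' Cons.IH[of i s1' "x # s2" o'] LB show ?thesis by auto
  next
    case LC
    with s' obtain x s2' where "s2 = x # s2'" "s' = (i, s1, s2', o' @ [x])" by (auto simp: stepC)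
    with s' Cons.IH[of i s1 s2' "o' @ [x]"] LC show ?thesis by auto
  qed
qed

lemma P2_good:
  assumes "\<pi> \<in> P2 n" "a1 > 0" "a2 > 0" "a3 > 0"
  shows "\<exists>r. r \<in> G a1 a2 a3 (int (n * (a1 + a2 + a3))) \<and>
             exec (rev r) ([1..<n+1], [], [], []) = Some ([], [], [], map \<pi> [1..<n+1])"
proof -
  from assms(1) have "move\<^sup>*\<^sup>* ([1..<n+1], [], [], []) ([], [], [], map \<pi> [1..<n+1])"
    unfolding P2_def by auto
  then obtain w where w: "exec w ([1..<n+1], [], [], []) = Some ([], [], [], map \<pi> [1..<n+1])"
    using star_exec by blast
  then have w': "exec (rev (rev w)) ([1..<n+1], [], [], []) = Some ([], [], [], map \<pi> [1..<n+1])" by simp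
  from rewrite_good[OF w'] obtain r where r: "goodr r"
    "exec (rev r) ([1..<n+1], [], [], []) = Some ([], [], [], map \<pi> [1..<n+1])" "mset r = mset (rev w)"
    by blast
  from exec_counts[OF w] have "count (mset w) LA = n" "count (mset w) LB = n" "count (mset w) LC = n"
    by (auto simp del: upt_Suc)
  then have "wt a1 a2 a3 r = n * (a1 + a2 + a3)"
    unfolding wt_count using r(3) by (simp add: algebra_simps)
  then show ?thesis using r unfolding G_def by auto
qed

lemma card_P2_le:
  assumes "a1 > 0" "a2 > 0" "a3 > 0"
  shows "card (P2 n) \<le> card (G a1 a2 a3 (int (n * (a1 + a2 + a3))))"
proof -
  let ?N = "int (n * (a1 + a2 + a3))"
  let ?s0 = "([1..<n+1], [], [], []) :: state"
  define f where "f \<pi> = (SOME r. r \<in> G a1 a2 a3 ?N \<and> exec (rev r) ?s0 = Some ([], [], [], map \<pi> [1..<n+1]))" for \<pi> :: "nat \<Rightarrow> nat"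
  have f: "f \<pi> \<in> G a1 a2 a3 ?N \<and> exec (rev (f \<pi>)) ?s0 = Some ([], [], [], map \<pi> [1..<n+1])"
    if "\<pi> \<in> P2 n" for \<pi>
    unfolding f_def by (rule someI_ex) (rule P2_good[OF that assms])
  have inj: "inj_on f (P2 n)"
  proof (rule inj_onI)
    fix \<pi>1 \<pi>2 assume p1: "\<pi>1 \<in> P2 n" and p2: "\<pi>2 \<in> P2 n" and eq: "f \<pi>1 = f \<pi>2"
    from f[OF p1] f[OF p2] eq have "map \<pi>1 [1..<n+1] = map \<pi>2 [1..<n+1]" by auto
    then have al: "\<forall>x\<in>set [1..<n+1]. \<pi>1 x = \<pi>2 x" by (simp only: map_eq_conv)
    have in_eq: "\<pi>1 x = \<pi>2 x" if "x \<in> {1..n}" for x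
      using that al by (auto simp del: upt_Suc)
    from p1 p2 have perm: "\<pi>1 permutes {1..n}" "\<pi>2 permutes {1..n}" unfolding P2_def by auto
    show "\<pi>1 = \<pi>2"
    proof
      fix x show "\<pi>1 x = \<pi>2 x"
      proof (cases "x \<in> {1..n}")
        case True then show ?thesis by (rule in_eq)
      next
        case False then show ?thesis using permutes_not_in[OF perm(1)] permutes_not_in[OF perm(2)] by simp
      qed
    qed
  qed
  show ?thesis
    by (rule card_inj_on_le[OF inj _ G_finite[OF assms]]) (use f in blast)
qed

theorem proposition5:
  fixes a1 a2 a3 n :: nat
  assumes "a1 > 0" and "a2 > 0" and "a3 > 0"
  shows "real (card (P2 n)) \<le>
    fps_nth (inverse (1 - fps_X ^ a1 - fps_X ^ a2 - fps_X ^ a3 + fps_X ^ (a1 + a3)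
                      + 2 * fps_X ^ (a1 + 2 * a2 + a3) :: real fps)) (n * (a1 + a2 + a3))"
proof -
  have "fps_nth (inverse (1 - fps_X ^ a1 - fps_X ^ a2 - fps_X ^ a3 + fps_X ^ (a1 + a3)
                      + 2 * fps_X ^ (a1 + 2 * a2 + a3) :: real fps)) (n * (a1 + a2 + a3))
        = real (card (G a1 a2 a3 (int (n * (a1 + a2 + a3)))))"
    unfolding fps_inv_eq[OF assms] by (simp add: gi_def)
  then show ?thesis using card_P2_le[OF assms, of n] by simp
qed

end
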